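(* Let $X,Y$ be compact Hausdorff spaces and $\pi\colon X\to Y$ a continuous surjection. Let $f\colon X\setminus I(f)\to X$ and $g\colon Y\setminus I(g)\to Y$ be partially continuous self-maps such that $I(f)\subseteq\pi^{-1}(I(g))$ and $\pi\circ f=g\circ\pi$ on $X\setminus\pi^{-1}(I(g))$. Then $h_{\mathrm{top}}(f)\ge h_{\mathrm{top}}(g)$.
   Context: A partially continuous self-map of a compact space $X$ is a continuous map $f\colon X\setminus I(f)\to X$ with $I(f)$ closed. Entropy: $\xi_0=X$, $\xi_n=\{x\in X\setminus I(f): f(x)\in\xi_{n-1}\}$; the canonical uniform structure has as entourages all neighbourhoods of the diagonal; for symmetric $\mathcal E$ and $x\in\xi_n$, $B^n_{\mathcal E}(x)=\{y\in\xi_n:(f^i(x),f^i(y))\in\mathcal E,0\le i\le n\}$; $S(n,\mathcal E)$ is the maximal size of $E\subset\xi_n$ with $x\notin B^n_{\mathcal E}(y)$ for distinct $x,y\in E$; $h_{\mathrm{top}}(f)=\sup_{\mathcal E}\limsup_n\frac1n\log S(n,\mathcal E)$. *)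

theory Defs
  imports "HOL-Analysis.Analysis"
begin

text \<open>A partially continuous self-map of the space (type) 'a: a map f, continuous on the
  complement of a closed indeterminacy set I.  Values of f on I are irrelevant.\<close>
definition partially_continuous :: "('a::topological_space \<Rightarrow> 'a) \<Rightarrow> 'a set \<Rightarrow> bool" where
  "partially_continuous f I \<longleftrightarrow> closed I \<and> continuous_on (- I) f"

fun xi :: "('a \<Rightarrow> 'a) \<Rightarrow> 'a set \<Rightarrow> nat \<Rightarrow> 'a set" where
  "xi f I 0 = UNIV"
| "xi f I (Suc n) = {x. x \<notin> I \<and> f x \<in> xi f I n}"

text \<open>Entourages of the canonical uniform structure of a compact space:
  all neighbourhoods of the diagonal in X \<times> X.\<close>
definition entourage :: "('a::topological_space \<times> 'a) set \<Rightarrow> bool" where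
  "entourage E \<longleftrightarrow> (\<exists>U. open U \<and> {(x, x) | x. True} \<subseteq> U \<and> U \<subseteq> E)"

definition symmetric_rel :: "('a \<times> 'a) set \<Rightarrow> bool" where
  "symmetric_rel E \<longleftrightarrow> (\<forall>x y. (x, y) \<in> E \<longrightarrow> (y, x) \<in> E)"

definition bowen_ball :: "('a \<Rightarrow> 'a) \<Rightarrow> 'a set \<Rightarrow> nat \<Rightarrow> ('a \<times> 'a) set \<Rightarrow> 'a \<Rightarrow> 'a set" where
  "bowen_ball f I n E x = {y \<in> xi f I n. \<forall>i\<le>n. ((f ^^ i) x, (f ^^ i) y) \<in> E}"

definition separated :: "('a \<Rightarrow> 'a) \<Rightarrow> 'a set \<Rightarrow> nat \<Rightarrow> ('a \<times> 'a) set \<Rightarrow> 'a set \<Rightarrow> bool" where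
  "separated f I n E F \<longleftrightarrow> F \<subseteq> xi f I n \<and>
     (\<forall>x\<in>F. \<forall>y\<in>F. x \<noteq> y \<longrightarrow> x \<notin> bowen_ball f I n E y)"

text \<open>S(n,E): maximal cardinality of an (n,E)-separated set (as an extended real;
  it is a finite number for entourages of a compact space).\<close>
definition sep_num :: "('a \<Rightarrow> 'a) \<Rightarrow> 'a set \<Rightarrow> nat \<Rightarrow> ('a \<times> 'a) set \<Rightarrow> ereal" where
  "sep_num f I n E = (SUP F\<in>{F. finite F \<and> separated f I n E F}. ereal (real (card F)))"

definition elog :: "ereal \<Rightarrow> ereal" where
  "elog x = (if x \<le> 0 then - \<infinity> else if x = \<infinity> then \<infinity> else ereal (ln (real_of_ereal x)))"

definition top_entropy :: "('a::topological_space \<Rightarrow> 'a) \<Rightarrow> 'a set \<Rightarrow> ereal" where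
  "top_entropy f I = (SUP E\<in>{E. entourage E \<and> symmetric_rel E}.
       limsup (\<lambda>n. elog (sep_num f I n E) / ereal (real n)))"

end

theory Submission
  imports Defs
begin

lemma elog_mono: "x \<le> y \<Longrightarrow> elog x \<le> elog y"
proof -
  assume xy: "x \<le> y"
  show ?thesis
  proof (cases "x \<le> 0")
    case False
    then have "y > 0" using xy by auto
    show ?thesis
    proof (cases "y = \<infinity>")
      case False
      then obtain a b where "x = ereal a" "y = ereal b" using xy \<open>\<not> x \<le> 0\<close> \<open>y > 0\<close>
        by (cases x; cases y) auto
      then show ?thesis using xy \<open>\<not> x \<le> 0\<close> \<open>y > 0\<close> False by (auto simp: elog_def)
    qed (use \<open>\<not> x \<le> 0\<close> \<open>y > 0\<close> in \<open>auto simp: elog_def\<close>)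
  qed (auto simp: elog_def)
qed

lemma xi_lift:
  assumes sub: "J \<subseteq> \<pi> -` Ig"
    and comm: "\<And>x. x \<notin> \<pi> -` Ig \<Longrightarrow> \<pi> (f x) = g (\<pi> x)"
  shows "y \<in> xi g Ig n \<Longrightarrow> \<pi> x = y \<Longrightarrow>
     x \<in> xi f J n \<and> (\<forall>i\<le>n. \<pi> ((f ^^ i) x) = (g ^^ i) y)"
proof (induction n arbitrary: x y)
  case 0
  then show ?case by simp
next
  case (Suc n)
  then have y: "y \<notin> Ig" "g y \<in> xi g Ig n" by auto
  have xn: "x \<notin> \<pi> -` Ig" using y Suc.prems by auto
  then have "x \<notin> J" using sub by auto
  have fx: "\<pi> (f x) = g y" using comm[OF xn] Suc.prems by simp
  from Suc.IH[OF y(2) fx] have ih: "f x \<in> xi f J n" "\<forall>i\<le>n. \<pi> ((f ^^ i) (f x)) = (g ^^ i) (g y)" by auto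
  have "\<forall>i\<le>Suc n. \<pi> ((f ^^ i) x) = (g ^^ i) y"
  proof (intro allI impI)
    fix i assume "i \<le> Suc n"
    then show "\<pi> ((f ^^ i) x) = (g ^^ i) y"
      using ih(2) Suc.prems by (cases i) (auto simp: funpow_Suc_right simp del: funpow.simps)
  qed
  then show ?case using ih(1) \<open>x \<notin> J\<close> by simp
qed

theorem corollary1p17:
  fixes \<pi> :: "'a::t2_space \<Rightarrow> 'b::t2_space"
    and f :: "'a \<Rightarrow> 'a" and If :: "'a set"
    and g :: "'b \<Rightarrow> 'b" and Ig :: "'b set"
  assumes "compact (UNIV :: 'a set)" and "compact (UNIV :: 'b set)"
    and "continuous_on UNIV \<pi>" and "surj \<pi>"
    and "partially_continuous f If" and "partially_continuous g Ig"
    and "If \<subseteq> \<pi> -` Ig"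
    and "\<And>x. x \<notin> \<pi> -` Ig \<Longrightarrow> \<pi> (f x) = g (\<pi> x)"
  shows "top_entropy f If \<ge> top_entropy g Ig"
proof -
  define s where "s = inv \<pi>"
  have ps: "\<pi> (s y) = y" for y using assms(4) unfolding s_def by (simp add: surj_f_inv_f)
  define P where "P = (\<lambda>p::'a\<times>'a. (\<pi> (fst p), \<pi> (snd p)))"
  have contP: "continuous_on UNIV P" unfolding P_def
    by (intro continuous_on_Pair continuous_on_compose2[OF assms(3)] continuous_on_fst continuous_on_snd) auto
  have sepmono: "sep_num g Ig n E \<le> sep_num f If n (P -` E)" for n E
    unfolding sep_num_def
  proof (rule SUP_mono)
    fix F assume F: "F \<in> {F. finite F \<and> separated g Ig n E F}"
    have inj: "inj_on s F" by (metis inj_on_inverseI ps)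
    have sep: "separated f If n (P -` E) (s ` F)"
      unfolding separated_def
    proof (intro conjI ballI impI)
      show "s ` F \<subseteq> xi f If n"
      proof
        fix a assume "a \<in> s ` F"
        then obtain y where "y \<in> F" "a = s y" by auto
        then have "y \<in> xi g Ig n" using F unfolding separated_def by auto
        then show "a \<in> xi f If n" using xi_lift[where J=If and \<pi>=\<pi> and Ig=Ig and f=f and g=g, OF assms(7,8), of y n a] ps \<open>a = s y\<close> by auto
      qed
    next
      fix a b assume a: "a \<in> s ` F" and b: "b \<in> s ` F" and ab: "a \<noteq> b"
      then obtain y z where yz: "y \<in> F" "z \<in> F" "a = s y" "b = s z" by auto
      with ab have "y \<noteq> z" by auto
      with F yz have nb: "y \<notin> bowen_ball g Ig n E z" unfolding separated_def by auto
      have ya: "y \<in> xi g Ig n" "z \<in> xi g Ig n" using F yz unfolding separated_def by auto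
      have la: "\<forall>i\<le>n. \<pi> ((f ^^ i) a) = (g ^^ i) y" using xi_lift[where J=If and \<pi>=\<pi> and Ig=Ig and f=f and g=g, OF assms(7,8) ya(1), of a] yz ps by auto
      have lb: "\<forall>i\<le>n. \<pi> ((f ^^ i) b) = (g ^^ i) z" using xi_lift[where J=If and \<pi>=\<pi> and Ig=Ig and f=f and g=g, OF assms(7,8) ya(2), of b] yz ps by auto
      show "a \<notin> bowen_ball f If n (P -` E) b"
      proof
        assume "a \<in> bowen_ball f If n (P -` E) b"
        then have "\<forall>i\<le>n. ((f ^^ i) b, (f ^^ i) a) \<in> P -` E" unfolding bowen_ball_def by auto
        then have "\<forall>i\<le>n. ((g ^^ i) z, (g ^^ i) y) \<in> E" using la lb unfolding P_def by auto
        then have "y \<in> bowen_ball g Ig n E z" using ya unfolding bowen_ball_def by auto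
        with nb show False by simp
      qed
    qed
    show "\<exists>m\<in>{F. finite F \<and> separated f If n (P -` E) F}. ereal (real (card F)) \<le> ereal (real (card m))"
      using F sep card_image[OF inj] by (intro bexI[of _ "s ` F"]) auto
  qed
  show ?thesis
    unfolding top_entropy_def
  proof (rule SUP_mono)
    fix E :: "('b \<times> 'b) set" assume E: "E \<in> {E. entourage E \<and> symmetric_rel E}"
    then obtain U :: "('b \<times> 'b) set" where U: "open U" "{(x, x) | x. True} \<subseteq> U" "U \<subseteq> E" unfolding entourage_def by auto
    have "open (P -` U)" using continuous_on_open_vimage[OF open_UNIV, of P] contP U(1) by simp
    moreover have "{(x, x) | x. True} \<subseteq> P -` U" using U(2) unfolding P_def by auto
    moreover have "P -` U \<subseteq> P -` E" using U(3) by auto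
    ultimately have "entourage (P -` E)" unfolding entourage_def by blast
    moreover have "symmetric_rel (P -` E)" using E unfolding symmetric_rel_def P_def by auto
    moreover have "limsup (\<lambda>n. elog (sep_num g Ig n E) / ereal (real n))
        \<le> limsup (\<lambda>n. elog (sep_num f If n (P -` E)) / ereal (real n))"
    proof (rule Limsup_mono)
      show "\<forall>\<^sub>F n in sequentially. elog (sep_num g Ig n E) / ereal (real n)
          \<le> elog (sep_num f If n (P -` E)) / ereal (real n)"
        using eventually_ge_at_top[of "1::nat"]
        by eventually_elim (intro ereal_divide_right_mono elog_mono sepmono, auto)
    qed
    ultimately show "\<exists>m\<in>{E. entourage E \<and> symmetric_rel E}.
        limsup (\<lambda>n. elog (sep_num g Ig n E) / ereal (real n))
        \<le> limsup (\<lambda>n. elog (sep_num f If n m) / ereal (real n))" by blast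
  qed
qed

end
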